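(* Fix an integer $n\geq3$ and run the $n$-GHZ state generation protocol (described in the context). Suppose the protocol heralds success. If all input photons have the ideal internal state $|\psi_0\rangle$, then the output state on modes $0,\dots,2n-1$ is $|B_+\rangle=\frac1{\sqrt2}\left(|1,0\rangle^{\otimes n}+|0,1\rangle^{\otimes n}\right)$ (with all photons in internal state $|\psi_0\rangle$), where the $j$-th factor refers to modes $(2j,2j+1)$.
   Context: Photonic model: photons occupy spatial modes and carry internal states; linear optics acts on spatial modes; photon-number-resolving (PNR) detection reveals only photon number per spatial mode. Hadamard beamsplitter $H$ on ordered pair $(p,q)$: $a_p^\dagger\mapsto(a_p^\dagger+a_q^\dagger)/\sqrt2$, $a_q^\dagger\mapsto(a_p^\dagger-a_q^\dagger)/\sqrt2$. The $n$-GHZ state analyzer on $2n$ modes labeled $0,\dots,2n-1$: apply $H$ to each ordered pair in $\{(1,2),(3,4),\dots,(2n-3,2n-2),(2n-1,0)\}$, PNR-measure all modes getting $(m_0,\dots,m_{2n-1})$, succeed iff $m_{2i+1}+m_{2i+2}=1$ for all $0\le i<n$ ($m_{2n}=m_0$); it reports the value $(-1)^{s_{\mathrm{odd}}}$ for $X_0\cdots X_{n-1}$, where $s_{\mathrm{odd}}$ is the number of photons detected in its odd-indexed modes. The $n$-GHZ generation protocol on $4n$ modes $0,\dots,4n-1$: (1) input $|1\rangle^{\otimes 2n}\otimes|0\rangle^{\otimes 2n}$; (2) apply $H$ on each pair $(2i,2i+1)$, $0\le i<n$; (3) apply $H$ on each pair $(i,2n+i)$, $0\le i<2n$; (4) apply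 the $n$-GHZ state analyzer to modes $2n,\dots,4n-1$ (mode $2n+j$ playing the role of analyzer mode $j$), proceeding iff it heralds success; (5) if the analyzer reports $X\cdots X=-1$, apply a phase $-1$ to mode $1$. The output consists of modes $0,\dots,2n-1$. *)

theory Defs
  imports Complex_Main
begin

text \<open>All photons carry the same internal state psi0, so the relevant state space is the
bosonic Fock space of the spatial modes 0,1,2,... A state is represented by the coefficients
of its creation-operator polynomial: psi N is the coefficient of the monomial
prod_k (a_k^dagger)^(N k) applied to the vacuum, where N :: nat => nat is an occupation
pattern. The Fock amplitude of |N> is psi N * sqrt(prod_k (N k)!).\<close>

type_synonym occ = "nat \<Rightarrow> nat"
type_synonym state = "occ \<Rightarrow> complex"

text \<open>Coefficient of x^k y^(a+b-k) in ((x+y)/sqrt 2)^a ((x-y)/sqrt 2)^b.\<close>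
definition bs_coeff :: "nat \<Rightarrow> nat \<Rightarrow> nat \<Rightarrow> complex" where
  "bs_coeff a b k =
     (\<Sum>i\<le>a. \<Sum>j\<le>b. if i + j = k
        then of_nat (a choose i) * of_nat (b choose j) * (-1) ^ (b - j) else 0)
     / complex_of_real (sqrt 2) ^ (a + b)"

text \<open>Hadamard beamsplitter on the ordered pair (p,q):
  a_p^dagger -> (a_p^dagger + a_q^dagger)/sqrt 2,  a_q^dagger -> (a_p^dagger - a_q^dagger)/sqrt 2,
  acting on the creation polynomial (monomial x^a y^b with x = a_p^dagger, y = a_q^dagger
  is mapped to the expansion of ((x+y)/sqrt 2)^a ((x-y)/sqrt 2)^b).\<close>
definition hadamard :: "nat \<Rightarrow> nat \<Rightarrow> state \<Rightarrow> state" where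
  "hadamard p q \<psi> N =
     (\<Sum>a\<le>N p + N q. \<psi> (N(p := a, q := N p + N q - a)) * bs_coeff a (N p + N q - a) (N p))"

definition hadamards :: "(nat \<times> nat) list \<Rightarrow> state \<Rightarrow> state" where
  "hadamards ps \<psi> = fold (\<lambda>(p, q) \<phi>. hadamard p q \<phi>) ps \<psi>"

definition phase_flip :: "nat \<Rightarrow> state \<Rightarrow> state" where
  "phase_flip r \<psi> N = (-1) ^ (N r) * \<psi> N"

definition amp :: "state \<Rightarrow> occ \<Rightarrow> complex" where
  "amp \<psi> N = \<psi> N * complex_of_real (sqrt (real (\<Prod>k\<in>{k. N k \<noteq> 0}. fact (N k))))"

definition ghz_input :: "nat \<Rightarrow> state" where
  "ghz_input n N = (if N = (\<lambda>k. if k < 2 * n then 1 else 0) then 1 else 0)"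

definition step2_pairs :: "nat \<Rightarrow> (nat \<times> nat) list" where
  "step2_pairs n = map (\<lambda>i. (2 * i, 2 * i + 1)) [0..<n]"

definition step3_pairs :: "nat \<Rightarrow> (nat \<times> nat) list" where
  "step3_pairs n = map (\<lambda>i. (i, 2 * n + i)) [0..<2 * n]"

text \<open>The n-GHZ analyzer pairs (1,2),(3,4),...,(2n-3,2n-2),(2n-1,0), shifted so that
analyzer mode j is mode 2n+j.\<close>
definition analyzer_pairs :: "nat \<Rightarrow> (nat \<times> nat) list" where
  "analyzer_pairs n = map (\<lambda>i. (2 * n + (2 * i + 1), 2 * n + ((2 * i + 2) mod (2 * n)))) [0..<n]"

definition pre_measurement :: "nat \<Rightarrow> state" where
  "pre_measurement n =
     hadamards (analyzer_pairs n) (hadamards (step3_pairs n) (hadamards (step2_pairs n) (ghz_input n)))"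

text \<open>Analyzer outcome m j = photon count in analyzer mode j (physical mode 2n+j), j < 2n.\<close>
definition analyzer_success :: "nat \<Rightarrow> (nat \<Rightarrow> nat) \<Rightarrow> bool" where
  "analyzer_success n m \<longleftrightarrow> (\<forall>i<n. m (2 * i + 1) + m ((2 * i + 2) mod (2 * n)) = 1)"

definition s_odd :: "nat \<Rightarrow> (nat \<Rightarrow> nat) \<Rightarrow> nat" where
  "s_odd n m = (\<Sum>i<n. m (2 * i + 1))"

definition join_occ :: "nat \<Rightarrow> occ \<Rightarrow> (nat \<Rightarrow> nat) \<Rightarrow> occ" where
  "join_occ n v m = (\<lambda>k. if k < 2 * n then v k else if k < 4 * n then m (k - 2 * n) else 0)"

text \<open>Unnormalized post-measurement state (Fock amplitudes) of output modes 0..2n-1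
after outcome m, including the conditional phase correction of step (5).\<close>
definition ghz_output :: "nat \<Rightarrow> (nat \<Rightarrow> nat) \<Rightarrow> occ \<Rightarrow> complex" where
  "ghz_output n m v =
     (if \<forall>k\<ge>2 * n. v k = 0 then
        amp (if odd (s_odd n m) then phase_flip 1 (pre_measurement n) else pre_measurement n)
            (join_occ n v m)
      else 0)"

definition B_plus :: "nat \<Rightarrow> occ \<Rightarrow> complex" where
  "B_plus n v =
     (if v = (\<lambda>k. if k < 2 * n \<and> even k then 1 else 0) then 1 / complex_of_real (sqrt 2) else 0)
   + (if v = (\<lambda>k. if k < 2 * n \<and> odd k then 1 else 0) then 1 / complex_of_real (sqrt 2) else 0)"

end

theory Submission imports Defs begin

definition gm :: "nat \<Rightarrow> nat \<Rightarrow> nat \<Rightarrow> nat" where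
  "gm n i r = (if r = 0 then 2*i else if r = 1 then 2*i+1 else if r = 2 then 2*n+2*i else 2*n+2*i+1)"

definition tup :: "nat \<Rightarrow> nat \<Rightarrow> occ \<Rightarrow> occ" where
  "tup n i N = (\<lambda>r. if r < 4 then N (gm n i r) else 0)"

definition zb :: "nat \<Rightarrow> occ \<Rightarrow> bool" where
  "zb n N = (\<forall>k\<ge>4*n. N k = 0)"

definition prodst :: "nat \<Rightarrow> (nat \<Rightarrow> state) \<Rightarrow> state" where
  "prodst n Fs N = (if zb n N then \<Prod>i<n. Fs i (tup n i N) else 0)"

lemma gm_lt: "i < n \<Longrightarrow> gm n i r < 4*n"
  by (auto simp: gm_def)

lemma gm_inj: "i < n \<Longrightarrow> j < n \<Longrightarrow> r < 4 \<Longrightarrow> s < 4 \<Longrightarrow> gm n i r = gm n j s \<Longrightarrow> i = j \<and> r = s"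
  by (auto simp: gm_def split: if_splits; presburger)

lemma tup_upd_same:
  assumes "i < n" "r < 4" "s < 4" "r \<noteq> s"
  shows "tup n i (N(gm n i r := x, gm n i s := y)) = (tup n i N)(r := x, s := y)"
  using assms by (auto simp: tup_def fun_eq_iff dest: gm_inj)

lemma tup_upd_other:
  assumes "i < n" "j < n" "j \<noteq> i" "r < 4" "s < 4"
  shows "tup n j (N(gm n i r := x, gm n i s := y)) = tup n j N"
  using assms by (auto simp: tup_def fun_eq_iff dest: gm_inj)

lemma had_local:
  assumes i: "i < n" and rs: "r < 4" "s < 4" "r \<noteq> s"
  shows "hadamard (gm n i r) (gm n i s) (prodst n Fs) = prodst n (Fs(i := hadamard r s (Fs i)))"
proof (rule ext)
  fix N :: occ
  define p where "p = gm n i r"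
  define q where "q = gm n i s"
  have pq: "p < 4*n" "q < 4*n" using gm_lt[OF i] by (auto simp: p_def q_def)
  have Zeq: "zb n (N(p := a, q := b)) = zb n N" for a b
    using pq by (auto simp: zb_def)
  have pN: "tup n i N r = N p" "tup n i N s = N q" using rs by (auto simp: tup_def p_def q_def)
  define R where "R = (\<Prod>j\<in>{..<n}-{i}. Fs j (tup n j N))"
  have R: "(\<Prod>j\<in>{..<n}-{i}. Fs j (tup n j (N(p := a, q := b)))) = R" for a b
    unfolding R_def p_def q_def
    by (rule prod.cong) (use i rs tup_upd_other in auto)
  have prod_split: "(\<Prod>j<n. G j) = G i * (\<Prod>j\<in>{..<n}-{i}. G j)" for G :: "nat \<Rightarrow> complex"
    using i by (simp add: prod.remove)
  show "hadamard (gm n i r) (gm n i s) (prodst n Fs) N = prodst n (Fs(i := hadamard r s (Fs i))) N"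
  proof (cases "zb n N")
    case False
    have z1: "prodst n G (N(p := a, q := b)) = 0" for G a b
      unfolding prodst_def Zeq using False by (simp only: False if_False)
    have z2: "prodst n G N = 0" for G
      unfolding prodst_def using False by (simp only: False if_False)
    show ?thesis
      unfolding hadamard_def p_def[symmetric] q_def[symmetric] z1 z2 by simp
  next
    case True
    note T = True
    have "hadamard p q (prodst n Fs) N
        = (\<Sum>a\<le>N p + N q. (Fs i ((tup n i N)(r := a, s := N p + N q - a)) * R) * bs_coeff a (N p + N q - a) (N p))"
      unfolding hadamard_def prodst_def Zeq using T
      apply (simp only: T[THEN eqTrueI] if_True)
      apply (rule sum.cong, simp)
      apply (subst prod_split)
      apply (simp only: R)
      apply (simp add: p_def q_def tup_upd_same[OF i rs])
      done
    also have "\<dots> = hadamard r s (Fs i) (tup n i N) * R"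
      unfolding hadamard_def pN by (simp add: sum_distrib_left mult_ac)
    also have "\<dots> = prodst n (Fs(i := hadamard r s (Fs i))) N"
      unfolding prodst_def using T
      apply (simp only: T[THEN eqTrueI] if_True)
      apply (subst prod_split)
      apply (simp add: R_def)
      done
    finally show ?thesis by (simp add: p_def q_def)
  qed
qed

lemma sq2: "complex_of_real (sqrt 2) ^ 2 = 2"
  by (metis of_real_numeral of_real_power real_sqrt_pow2 zero_le_numeral)

lemma sq2m: "complex_of_real (sqrt 2) * complex_of_real (sqrt 2) = 2"
  using sq2 by (simp add: power2_eq_square)

lemma sq2nz: "complex_of_real (sqrt 2) \<noteq> 0" by simp

lemma bs_11_0: "bs_coeff 1 1 0 = -1/2" by (simp add: bs_coeff_def sq2m)
lemma bs_11_1: "bs_coeff 1 1 1 = 0" by (simp add: bs_coeff_def sq2m)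
lemma bs_11_2: "bs_coeff 1 1 2 = 1/2" by (simp add: bs_coeff_def sq2m numeral_2_eq_2)
lemma bs_20_1: "bs_coeff 2 0 1 = 1" by (simp add: bs_coeff_def sq2m numeral_2_eq_2)
lemma bs_00_0: "bs_coeff 0 0 0 = 1" by (simp add: bs_coeff_def)
lemma bs_01_0: "bs_coeff 0 1 0 = -1 / complex_of_real (sqrt 2)" by (simp add: bs_coeff_def)
lemma bs_01_1: "bs_coeff 0 1 1 = 1 / complex_of_real (sqrt 2)" by (simp add: bs_coeff_def)
lemma bs_10_0: "bs_coeff 1 0 0 = 1 / complex_of_real (sqrt 2)" by (simp add: bs_coeff_def)
lemma bs_10_1: "bs_coeff 1 0 1 = 1 / complex_of_real (sqrt 2)" by (simp add: bs_coeff_def)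

lemmas bsS = bs_11_0 bs_11_1 bs_11_2 bs_20_1 bs_00_0
  bs_11_0[unfolded One_nat_def] bs_11_1[unfolded One_nat_def] bs_11_2[unfolded One_nat_def numeral_2_eq_2]
  bs_20_1[unfolded One_nat_def numeral_2_eq_2] bs_10_0[unfolded One_nat_def] bs_10_1[unfolded One_nat_def]

definition phi0 :: state where
  "phi0 u = (if u 0 = 1 \<and> u 1 = 1 \<and> u 2 = 0 \<and> u 3 = 0 then 1 else 0)"
definition "phi1 = hadamard 0 1 phi0"
definition "phi2 = hadamard 0 2 phi1"
definition "phi3 = hadamard 1 3 phi2"

lemma phi1_eq: "phi1 u = (if u 0 + u 1 = 2 \<and> u 2 = 0 \<and> u 3 = 0 then bs_coeff 1 1 (u 0) else 0)"
proof -
  have "phi1 u = (\<Sum>a\<le>u 0 + u 1. (if a = 1 then (if u 0 + u 1 = 2 \<and> u 2 = 0 \<and> u 3 = 0 then bs_coeff 1 1 (u 0) else 0) else 0))"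
    unfolding phi1_def hadamard_def
    by (rule sum.cong) (auto simp: phi0_def)
  also have "\<dots> = (if u 0 + u 1 = 2 \<and> u 2 = 0 \<and> u 3 = 0 then bs_coeff 1 1 (u 0) else 0)"
    by (subst sum.delta) auto
  finally show ?thesis .
qed

lemma phi2_eq: "phi2 u = (if u 0 + u 2 + u 1 = 2 \<and> u 3 = 0 then bs_coeff 1 1 (u 0 + u 2) * bs_coeff (u 0 + u 2) 0 (u 0) else 0)"
proof -
  have "phi2 u = (\<Sum>a\<le>u 0 + u 2. (if a = u 0 + u 2 then (if u 0 + u 2 + u 1 = 2 \<and> u 3 = 0 then bs_coeff 1 1 (u 0 + u 2) * bs_coeff (u 0 + u 2) 0 (u 0) else 0) else 0))"
    unfolding phi2_def hadamard_def
    by (rule sum.cong) (auto simp: phi1_eq)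
  also have "\<dots> = (if u 0 + u 2 + u 1 = 2 \<and> u 3 = 0 then bs_coeff 1 1 (u 0 + u 2) * bs_coeff (u 0 + u 2) 0 (u 0) else 0)"
    by (subst sum.delta) auto
  finally show ?thesis .
qed

lemma phi3_eq: "phi3 u = (if u 0 + u 2 + (u 1 + u 3) = 2 then bs_coeff 1 1 (u 0 + u 2) * bs_coeff (u 0 + u 2) 0 (u 0) * bs_coeff (u 1 + u 3) 0 (u 1) else 0)"
proof -
  have "phi3 u = (\<Sum>a\<le>u 1 + u 3. (if a = u 1 + u 3 then (if u 0 + u 2 + (u 1 + u 3) = 2 then bs_coeff 1 1 (u 0 + u 2) * bs_coeff (u 0 + u 2) 0 (u 0) * bs_coeff (u 1 + u 3) 0 (u 1) else 0) else 0))"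
    unfolding phi3_def hadamard_def
    by (rule sum.cong) (auto simp: phi2_eq)
  also have "\<dots> = (if u 0 + u 2 + (u 1 + u 3) = 2 then bs_coeff 1 1 (u 0 + u 2) * bs_coeff (u 0 + u 2) 0 (u 0) * bs_coeff (u 1 + u 3) 0 (u 1) else 0)"
    by (subst sum.delta) auto
  finally show ?thesis .
qed

definition loc :: "nat \<Rightarrow> nat \<Rightarrow> nat \<Rightarrow> nat \<Rightarrow> occ" where
  "loc a b c d = (\<lambda>r. if r = 0 then a else if r = 1 then b else if r = 2 then c else if r = 3 then d else 0)"

lemma F1: "phi3 (loc a b 1 1) = 0"
proof -
  have "a + 1 + (b + 1) = 2 \<Longrightarrow> a = 0 \<and> b = 0" by arith
  then show ?thesis
    by (cases "a + 1 + (b + 1) = 2") (auto simp: phi3_eq loc_def bsS)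
qed

lemma F2: "phi3 (loc a b 1 0) = (if a = 1 \<and> b = 0 then 1/2 else 0)"
proof -
  have "a + 1 + b = 2 \<Longrightarrow> (a = 1 \<and> b = 0) \<or> (a = 0 \<and> b = 1)" by arith
  then consider "a = 1 \<and> b = 0" | "a = 0 \<and> b = 1" | "a + 1 + b \<noteq> 2" by blast
  then show ?thesis
  proof cases
    case 1 then show ?thesis by (simp add: phi3_eq loc_def bsS)
  next
    case 2 then show ?thesis by (simp add: phi3_eq loc_def bsS)
  next
    case 3 then show ?thesis by (auto simp: phi3_eq loc_def)
  qed
qed

lemma F3: "phi3 (loc a b 0 1) = (if a = 0 \<and> b = 1 then -1/2 else 0)"
proof -
  have "a + (b + 1) = 2 \<Longrightarrow> (a = 1 \<and> b = 0) \<or> (a = 0 \<and> b = 1)" by arith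
  then consider "a = 1 \<and> b = 0" | "a = 0 \<and> b = 1" | "a + (b + 1) \<noteq> 2" by blast
  then show ?thesis
  proof cases
    case 1 then show ?thesis by (simp add: phi3_eq loc_def bsS)
  next
    case 2 then show ?thesis by (simp add: phi3_eq loc_def bsS)
  next
    case 3 then show ?thesis by (auto simp: phi3_eq loc_def)
  qed
qed

lemma hadamards_snoc: "hadamards (xs @ [(p, q)]) \<psi> = hadamard p q (hadamards xs \<psi>)"
  by (simp add: hadamards_def)

lemma prod_if_all: "(\<Prod>i<n. if P i then c else 0) = (if \<forall>i<n. P i then c ^ n else (0::complex))"
  by (induction n) (auto simp: less_Suc_eq)

lemma prodst_cong: "(\<And>i. i < n \<Longrightarrow> F i = G i) \<Longrightarrow> prodst n F = prodst n G"
  unfolding prodst_def by (intro ext) (auto intro!: prod.cong)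

lemma input_eq: "ghz_input n = prodst n (\<lambda>_. phi0)"
proof (rule ext)
  fix N :: occ
  have cover: "\<exists>i<n. \<exists>r<4. k = gm n i r" if "k < 4*n" for k
  proof (cases "k < 2*n")
    case True
    show ?thesis
    proof (cases "even k")
      case True
      then show ?thesis using \<open>k < 2*n\<close>
        by (intro exI[of _ "k div 2"]) (auto simp: gm_def intro!: exI[of _ 0])
    next
      case False
      then show ?thesis using \<open>k < 2*n\<close>
        by (intro exI[of _ "k div 2"]) (auto simp: gm_def intro!: exI[of _ 1] elim!: oddE)
    qed
  next
    case False
    show ?thesis
    proof (cases "even k")
      case True
      then show ?thesis using \<open>\<not> k < 2*n\<close> that
        by (intro exI[of _ "(k - 2*n) div 2"]) (auto simp: gm_def intro!: exI[of _ 2] elim!: evenE)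
    next
      case False
      then show ?thesis using \<open>\<not> k < 2*n\<close> that
        by (intro exI[of _ "(k - 2*n) div 2"]) (auto simp: gm_def intro!: exI[of _ 3] elim!: oddE)
    qed
  qed
  have iff: "(N = (\<lambda>k. if k < 2 * n then 1 else 0)) \<longleftrightarrow>
        zb n N \<and> (\<forall>i<n. N (2*i) = 1 \<and> N (2*i+1) = 1 \<and> N (2*n+2*i) = 0 \<and> N (2*n+2*i+1) = 0)"
  proof
    assume "N = (\<lambda>k. if k < 2 * n then 1 else 0)"
    then show "zb n N \<and> (\<forall>i<n. N (2*i) = 1 \<and> N (2*i+1) = 1 \<and> N (2*n+2*i) = 0 \<and> N (2*n+2*i+1) = 0)"
      by (auto simp: zb_def)
  next
    assume A: "zb n N \<and> (\<forall>i<n. N (2*i) = 1 \<and> N (2*i+1) = 1 \<and> N (2*n+2*i) = 0 \<and> N (2*n+2*i+1) = 0)"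
    show "N = (\<lambda>k. if k < 2 * n then 1 else 0)"
    proof (rule ext)
      fix k
      show "N k = (if k < 2 * n then 1 else 0)"
      proof (cases "k < 4*n")
        case True
        then obtain i r where "i < n" "r < 4" "k = gm n i r" using cover by blast
        then show ?thesis using A
          by (auto simp: gm_def split: if_splits)
      next
        case False
        then show ?thesis using A by (auto simp: zb_def)
      qed
    qed
  qed
  have pe: "prodst n (\<lambda>_. phi0) N = (if zb n N \<and> (\<forall>i<n. N (2*i) = 1 \<and> N (2*i+1) = 1 \<and> N (2*n+2*i) = 0 \<and> N (2*n+2*i+1) = 0) then 1 else 0)"
    unfolding prodst_def phi0_def tup_def
    by (subst prod_if_all) (simp add: gm_def)
  show "ghz_input n N = prodst n (\<lambda>_. phi0) N"
    unfolding pe ghz_input_def by (simp only: iff)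
qed

lemma step2_gen: "k \<le> n \<Longrightarrow> hadamards (map (\<lambda>i. (2 * i, 2 * i + 1)) [0..<k]) (prodst n (\<lambda>_. phi0))
   = prodst n (\<lambda>i. if i < k then phi1 else phi0)"
proof (induction k)
  case 0
  then show ?case by (simp add: hadamards_def)
next
  case (Suc k)
  have e: "(2 * k, 2 * k + 1) = (gm n k 0, gm n k 1)" by (simp add: gm_def)
  have "hadamards (map (\<lambda>i. (2 * i, 2 * i + 1)) [0..<Suc k]) (prodst n (\<lambda>_. phi0))
      = hadamard (gm n k 0) (gm n k 1) (prodst n (\<lambda>i. if i < k then phi1 else phi0))"
    using Suc by (simp add: hadamards_snoc gm_def)
  also have "\<dots> = prodst n (\<lambda>i. if i < Suc k then phi1 else phi0)"
    by (subst had_local) (use Suc.prems in \<open>auto simp: phi1_def intro!: prodst_cong\<close>)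
  finally show ?case .
qed

lemma step2_eq: "hadamards (step2_pairs n) (ghz_input n) = prodst n (\<lambda>_. phi1)"
  using step2_gen[of n n] by (simp add: step2_pairs_def input_eq cong: prodst_cong)

lemma step3_gen: "j \<le> 2*n \<Longrightarrow> hadamards (map (\<lambda>i. (i, 2 * n + i)) [0..<j]) (prodst n (\<lambda>_. phi1))
   = prodst n (\<lambda>i. if 2*i+1 < j then phi3 else if 2*i < j then phi2 else phi1)"
proof (induction j)
  case 0
  then show ?case by (simp add: hadamards_def)
next
  case (Suc j)
  have "hadamards (map (\<lambda>i. (i, 2 * n + i)) [0..<Suc j]) (prodst n (\<lambda>_. phi1))
      = hadamard j (2*n+j) (prodst n (\<lambda>i. if 2*i+1 < j then phi3 else if 2*i < j then phi2 else phi1))"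
    using Suc by (simp add: hadamards_snoc)
  also have "\<dots> = prodst n (\<lambda>i. if 2*i+1 < Suc j then phi3 else if 2*i < Suc j then phi2 else phi1)"
  proof (cases "even j")
    case True
    then obtain k where k: "j = 2*k" by blast
    have kn: "k < n" using Suc.prems k by auto
    have e: "hadamard j (2*n+j) = hadamard (gm n k 0) (gm n k 2)" using k by (auto simp: gm_def)
    show ?thesis unfolding e
      by (subst had_local) (use kn k in \<open>auto simp: phi2_def intro!: prodst_cong\<close>)
  next
    case False
    then obtain k where k: "j = 2*k+1" using oddE by blast
    have kn: "k < n" using Suc.prems k by auto
    have e: "hadamard j (2*n+j) = hadamard (gm n k 1) (gm n k 3)" using k by (auto simp: gm_def)
    show ?thesis unfolding e
      by (subst had_local) (use kn k in \<open>auto simp: phi3_def intro!: prodst_cong\<close>)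
  qed
  finally show ?case .
qed

lemma step3_eq: "hadamards (step3_pairs n) (hadamards (step2_pairs n) (ghz_input n)) = prodst n (\<lambda>_. phi3)"
  using step3_gen[of "2*n" n] by (simp add: step3_pairs_def step2_eq cong: prodst_cong)

definition aa :: "nat \<Rightarrow> nat \<Rightarrow> nat" where "aa n j = gm n j 3"
definition bb :: "nat \<Rightarrow> nat \<Rightarrow> nat" where "bb n j = gm n ((j + 1) mod n) 2"
definition chi :: "nat set \<Rightarrow> nat \<Rightarrow> nat" where "chi T j = (if j \<in> T then 1 else 0)"

primrec updA :: "nat \<Rightarrow> nat \<Rightarrow> nat set \<Rightarrow> occ \<Rightarrow> occ" where
  "updA n 0 T N = N"
| "updA n (Suc k) T N = (updA n k T N)(aa n k := chi T k, bb n k := 1 - chi T k)"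

lemma aa_ne_bb: "0 < n \<Longrightarrow> j < n \<Longrightarrow> k < n \<Longrightarrow> aa n j \<noteq> bb n k"
  unfolding aa_def bb_def using gm_inj[of j n "(k+1) mod n" 3 2] by auto

lemma aa_inj: "j < n \<Longrightarrow> k < n \<Longrightarrow> aa n j = aa n k \<Longrightarrow> j = k"
  unfolding aa_def using gm_inj[of j n k 3 3] by auto

lemma bb_inj: assumes "0 < n" "j < n" "k < n" "bb n j = bb n k" shows "j = k"
proof -
  have "(j+1) mod n = (k+1) mod n"
    using assms gm_inj[of "(j+1) mod n" n "(k+1) mod n" 2 2] unfolding bb_def by auto
  moreover have "(j+1) mod n = (if j + 1 = n then 0 else j + 1)" using assms by auto
  moreover have "(k+1) mod n = (if k + 1 = n then 0 else k + 1)" using assms by auto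
  ultimately show ?thesis using assms by (auto split: if_splits)
qed

lemma updA_other: "(\<forall>j<k. x \<noteq> aa n j \<and> x \<noteq> bb n j) \<Longrightarrow> updA n k T N x = N x"
  by (induction k) auto

lemma updA_aa: "0 < n \<Longrightarrow> k \<le> n \<Longrightarrow> j < k \<Longrightarrow> updA n k T N (aa n j) = chi T j"
proof (induction k)
  case 0 then show ?case by simp
next
  case (Suc k)
  show ?case
  proof (cases "j = k")
    case True then show ?thesis using Suc.prems aa_ne_bb[of n k k] by auto
  next
    case False
    then have "aa n j \<noteq> aa n k" "aa n j \<noteq> bb n k"
      using Suc.prems aa_inj[of j n k] aa_ne_bb[of n j k] by auto
    then show ?thesis using Suc False by auto
  qed
qed

lemma updA_bb: "0 < n \<Longrightarrow> k \<le> n \<Longrightarrow> j < k \<Longrightarrow> updA n k T N (bb n j) = 1 - chi T j"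
proof (induction k)
  case 0 then show ?case by simp
next
  case (Suc k)
  show ?case
  proof (cases "j = k")
    case True then show ?thesis using Suc.prems by auto
  next
    case False
    then have "bb n j \<noteq> aa n k" "bb n j \<noteq> bb n k"
      using Suc.prems bb_inj[of n j k] aa_ne_bb[of n k j] by auto
    then show ?thesis using Suc False by auto
  qed
qed

lemma updA_commute:
  "0 < n \<Longrightarrow> k \<le> K \<Longrightarrow> K < n \<Longrightarrow>
   updA n k T (N(aa n K := c, bb n K := d)) = (updA n k T N)(aa n K := c, bb n K := d)"
proof (induction k)
  case 0 then show ?case by simp
next
  case (Suc k)
  have d: "aa n k \<noteq> aa n K" "aa n k \<noteq> bb n K" "bb n k \<noteq> aa n K" "bb n k \<noteq> bb n K"
    using Suc.prems aa_inj[of k n K] aa_ne_bb[of n k K] aa_ne_bb[of n K k] bb_inj[of n k K] by auto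
  show ?case using Suc d by (auto simp: fun_eq_iff)
qed

lemma updA_insert: "k' \<le> k \<Longrightarrow> updA n k' (insert k T) N = updA n k' T N"
  by (induction k') (auto simp: chi_def)

lemma analyzer_gen:
  "0 < n \<Longrightarrow> k \<le> n \<Longrightarrow> (\<forall>j<k. N (aa n j) + N (bb n j) = 1) \<Longrightarrow>
   hadamards (map (\<lambda>j. (aa n j, bb n j)) [0..<k]) \<psi> N =
   (\<Sum>T\<in>Pow {..<k}. (\<Prod>j<k. bs_coeff (chi T j) (1 - chi T j) (N (aa n j))) * \<psi> (updA n k T N))"
proof (induction k arbitrary: N)
  case 0 then show ?case by (simp add: hadamards_def)
next
  case (Suc k)
  let ?H = "hadamards (map (\<lambda>j. (aa n j, bb n j)) [0..<k]) \<psi>"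
  let ?W = "\<lambda>T. (\<Prod>j<k. bs_coeff (chi T j) (1 - chi T j) (N (aa n j)))"
  have s1: "N (aa n k) + N (bb n k) = 1" using Suc.prems by auto
  have IH: "?H (N(aa n k := c, bb n k := d)) = (\<Sum>T\<in>Pow {..<k}. ?W T * \<psi> ((updA n k T N)(aa n k := c, bb n k := d)))" for c d
  proof -
    have d: "aa n j \<noteq> aa n k" "aa n j \<noteq> bb n k" "bb n j \<noteq> aa n k" "bb n j \<noteq> bb n k" if "j < k" for j
      using Suc.prems that aa_inj[of j n k] aa_ne_bb[of n j k] aa_ne_bb[of n k j] bb_inj[of n j k] by auto
    have "?H (N(aa n k := c, bb n k := d)) = (\<Sum>T\<in>Pow {..<k}. (\<Prod>j<k. bs_coeff (chi T j) (1 - chi T j) ((N(aa n k := c, bb n k := d)) (aa n j))) * \<psi> (updA n k T (N(aa n k := c, bb n k := d))))"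
      using Suc.prems d by (intro Suc.IH) auto
    also have "\<dots> = (\<Sum>T\<in>Pow {..<k}. ?W T * \<psi> ((updA n k T N)(aa n k := c, bb n k := d)))"
      using Suc.prems d by (intro sum.cong refl arg_cong2[where f="(*)"] prod.cong) (auto simp: updA_commute)
    finally show ?thesis .
  qed
  have "hadamards (map (\<lambda>j. (aa n j, bb n j)) [0..<Suc k]) \<psi> N = hadamard (aa n k) (bb n k) ?H N"
    by (simp add: hadamards_snoc)
  also have "\<dots> = ?H (N(aa n k := 0, bb n k := 1)) * bs_coeff 0 1 (N (aa n k)) + ?H (N(aa n k := 1, bb n k := 0)) * bs_coeff 1 0 (N (aa n k))"
    unfolding hadamard_def s1 by (simp add: atMost_Suc)
  also have "\<dots> = (\<Sum>T\<in>Pow {..<k}. ?W T * bs_coeff 0 1 (N (aa n k)) * \<psi> ((updA n k T N)(aa n k := 0, bb n k := 1)))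
      + (\<Sum>T\<in>Pow {..<k}. ?W T * bs_coeff 1 0 (N (aa n k)) * \<psi> ((updA n k T N)(aa n k := 1, bb n k := 0)))"
    unfolding IH by (simp add: sum_distrib_left sum_distrib_right mult_ac)
  also have "\<dots> = (\<Sum>T\<in>Pow {..<Suc k}. (\<Prod>j<Suc k. bs_coeff (chi T j) (1 - chi T j) (N (aa n j))) * \<psi> (updA n (Suc k) T N))"
  proof -
    have P: "Pow {..<Suc k} = Pow {..<k} \<union> insert k ` Pow {..<k}"
      by (simp add: lessThan_Suc Pow_insert)
    have disj: "Pow {..<k} \<inter> insert k ` Pow {..<k} = {}" by auto
    have inj: "inj_on (insert k) (Pow {..<k})"
      by (rule inj_onI) (metis Diff_insert_absorb PowD lessThan_iff order_less_irrefl subset_eq)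
    have A: "(\<Sum>T\<in>Pow {..<k}. (\<Prod>j<Suc k. bs_coeff (chi T j) (1 - chi T j) (N (aa n j))) * \<psi> (updA n (Suc k) T N))
        = (\<Sum>T\<in>Pow {..<k}. ?W T * bs_coeff 0 1 (N (aa n k)) * \<psi> ((updA n k T N)(aa n k := 0, bb n k := 1)))"
    proof (rule sum.cong[OF refl])
      fix T assume "T \<in> Pow {..<k}"
      then have "k \<notin> T" by auto
      then show "(\<Prod>j<Suc k. bs_coeff (chi T j) (1 - chi T j) (N (aa n j))) * \<psi> (updA n (Suc k) T N)
          = ?W T * bs_coeff 0 1 (N (aa n k)) * \<psi> ((updA n k T N)(aa n k := 0, bb n k := 1))"
        by (simp add: chi_def)
    qed
    have B: "(\<Sum>T\<in>insert k ` Pow {..<k}. (\<Prod>j<Suc k. bs_coeff (chi T j) (1 - chi T j) (N (aa n j))) * \<psi> (updA n (Suc k) T N))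
        = (\<Sum>T\<in>Pow {..<k}. ?W T * bs_coeff 1 0 (N (aa n k)) * \<psi> ((updA n k T N)(aa n k := 1, bb n k := 0)))"
      unfolding sum.reindex[OF inj] o_def
    proof (rule sum.cong[OF refl])
      fix T assume "T \<in> Pow {..<k}"
      have w: "(\<Prod>j<k. bs_coeff (chi (insert k T) j) (1 - chi (insert k T) j) (N (aa n j))) = ?W T"
        by (rule prod.cong) (auto simp: chi_def)
      show "(\<Prod>j<Suc k. bs_coeff (chi (insert k T) j) (1 - chi (insert k T) j) (N (aa n j))) * \<psi> (updA n (Suc k) (insert k T) N)
          = ?W T * bs_coeff 1 0 (N (aa n k)) * \<psi> ((updA n k T N)(aa n k := 1, bb n k := 0))"
        using w by (simp add: updA_insert chi_def)
    qed
    show ?thesis unfolding P by (subst sum.union_disjoint) (use disj A B in auto)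
  qed
  finally show ?case .
qed

lemma analyzer_pairs_eq: "0 < n \<Longrightarrow> analyzer_pairs n = map (\<lambda>j. (aa n j, bb n j)) [0..<n]"
  unfolding analyzer_pairs_def aa_def bb_def gm_def
  by (auto simp: mult_mod_right)

lemma pre_eq: "0 < n \<Longrightarrow> pre_measurement n = hadamards (map (\<lambda>j. (aa n j, bb n j)) [0..<n]) (prodst n (\<lambda>_. phi3))"
  unfolding pre_measurement_def by (simp add: analyzer_pairs_eq step3_eq)

definition pd :: "nat \<Rightarrow> nat \<Rightarrow> nat" where "pd n i = (if i = 0 then n - 1 else i - 1)"

lemma pd_lt: "0 < n \<Longrightarrow> i < n \<Longrightarrow> pd n i < n" by (auto simp: pd_def)

lemma bb_pd: "0 < n \<Longrightarrow> i < n \<Longrightarrow> bb n (pd n i) = gm n i 2"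
proof -
  assume "0 < n" "i < n"
  then have "(pd n i + 1) mod n = i" by (auto simp: pd_def)
  then show ?thesis by (simp add: bb_def)
qed

lemma zb_updA: "0 < n \<Longrightarrow> k \<le> n \<Longrightarrow> zb n N \<Longrightarrow> zb n (updA n k T N)"
proof (induction k)
  case 0 then show ?case by simp
next
  case (Suc k)
  have "aa n k < 4*n" "bb n k < 4*n" using Suc.prems by (auto simp: aa_def bb_def intro!: gm_lt)
  then show ?case using Suc by (auto simp: zb_def)
qed

lemma tup_updA:
  assumes n: "0 < n" and i: "i < n" and N: "\<forall>k<2*n. N k = v k"
  shows "tup n i (updA n n T N) = loc (v (2*i)) (v (2*i+1)) (1 - chi T (pd n i)) (chi T i)"
proof (rule ext)
  fix r :: nat
  have nab: "x \<noteq> aa n j \<and> x \<noteq> bb n j" if "x < 2*n" for x j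
    using that by (auto simp: aa_def bb_def gm_def)
  consider "r = 0" | "r = 1" | "r = 2" | "r = 3" | "r \<ge> 4" by arith
  then show "tup n i (updA n n T N) r = loc (v (2*i)) (v (2*i+1)) (1 - chi T (pd n i)) (chi T i) r"
  proof cases
    case 1 then show ?thesis using i N by (simp add: tup_def loc_def gm_def updA_other nab)
  next
    case 2 then show ?thesis using i N by (simp add: tup_def loc_def gm_def updA_other nab)
  next
    case 3 then show ?thesis using n i updA_bb[of n n "pd n i" T N] pd_lt[OF n i]
      by (simp add: tup_def loc_def bb_pd)
  next
    case 4 then show ?thesis using n i updA_aa[of n n i T N]
      by (simp add: tup_def loc_def aa_def)
  next
    case 5 then show ?thesis by (simp add: tup_def loc_def)
  qed
qed

lemma closure_all:
  assumes n: "0 < n" and sub: "T \<subseteq> {..<n}" and cl: "\<And>i. i < n \<Longrightarrow> i \<in> T \<Longrightarrow> pd n i \<in> T"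
    and ne: "T \<noteq> {}"
  shows "T = {..<n}"
proof -
  have down: "\<forall>j\<le>i. j \<in> T" if "i \<in> T" "i < n" for i
    using that
  proof (induction i)
    case 0 then show ?case by auto
  next
    case (Suc i)
    have "i \<in> T" using cl[of "Suc i"] Suc.prems by (simp add: pd_def)
    then show ?case using Suc by (auto simp: le_Suc_eq)
  qed
  obtain k where "k \<in> T" using ne by auto
  then have "k < n" using sub by auto
  have "0 \<in> T" using down[OF \<open>k \<in> T\<close> \<open>k < n\<close>] by auto
  then have "n - 1 \<in> T" using cl[of 0] n by (simp add: pd_def)
  then have "\<forall>j\<le>n-1. j \<in> T" using down n by auto
  then have "{..<n} \<subseteq> T" by auto
  then show ?thesis using sub by auto
qed

lemma m_le1:
  assumes n: "0 < n" and succ: "analyzer_success n m" and x: "x < 2*n"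
  shows "m x \<le> 1"
proof (cases "even x")
  case False
  then obtain i where i: "x = 2*i+1" using oddE by blast
  then have "i < n" using x by auto
  then show ?thesis using succ i unfolding analyzer_success_def by fastforce
next
  case True
  then obtain i where i: "x = 2*i" by blast
  show ?thesis
  proof (cases "i = 0")
    case True
    have "2 * (n - 1) + 2 = 2 * n" using n by auto
    then have "(2 * (n - 1) + 2) mod (2 * n) = 0" by simp
    then show ?thesis using succ n i True unfolding analyzer_success_def
      by (metis add_leD2 diff_less less_numeral_extra(1) order_refl mult_zero_right)
  next
    case False
    have "(2 * (i - 1) + 2) = 2 * i" using False by auto
    moreover have "2*i < 2*n" using x i by auto
    ultimately have "(2 * (i - 1) + 2) mod (2 * n) = 2 * i" by simp
    moreover have "i - 1 < n" using x i by auto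
    ultimately show ?thesis using succ i unfolding analyzer_success_def
      by (metis add_leD2 order_refl)
  qed
qed

lemma pre_val:
  assumes n: "0 < n" and succ: "analyzer_success n m" and Zv: "\<forall>k\<ge>2*n. v k = 0"
  shows "pre_measurement n (join_occ n v m) =
     (if \<forall>i<n. v (2*i) = 1 \<and> v (2*i+1) = 0 then (1/2)^n * (\<Prod>j<n. bs_coeff 0 1 (m (2*j+1))) else 0)
   + (if \<forall>i<n. v (2*i) = 0 \<and> v (2*i+1) = 1 then (-1/2)^n * (\<Prod>j<n. bs_coeff 1 0 (m (2*j+1))) else 0)"
proof -
  define N0 where "N0 = join_occ n v m"
  have Na: "N0 (aa n j) = m (2*j+1)" if "j < n" for j
    using that by (simp add: N0_def join_occ_def aa_def gm_def)
  have Nb: "N0 (bb n j) = m ((2*j+2) mod (2*n))" if "j < n" for j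
  proof -
    have "(j+1) mod n < n" using n by auto
    then show ?thesis using that by (simp add: N0_def join_occ_def bb_def gm_def mult_mod_right)
  qed
  have cond: "\<forall>j<n. N0 (aa n j) + N0 (bb n j) = 1"
    using succ Na Nb unfolding analyzer_success_def by auto
  have zN: "zb n N0" by (auto simp: zb_def N0_def join_occ_def)
  have Nv: "\<forall>k<2*n. N0 k = v k" by (simp add: N0_def join_occ_def)
  define W where "W T = (\<Prod>j<n. bs_coeff (chi T j) (1 - chi T j) (N0 (aa n j)))" for T
  define tm where "tm T = W T * (\<Prod>i<n. phi3 (loc (v (2*i)) (v (2*i+1)) (1 - chi T (pd n i)) (chi T i)))" for T
  have "pre_measurement n N0 = (\<Sum>T\<in>Pow {..<n}. W T * prodst n (\<lambda>_. phi3) (updA n n T N0))"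
    unfolding pre_eq[OF n] W_def by (rule analyzer_gen[OF n order_refl cond])
  also have "\<dots> = (\<Sum>T\<in>Pow {..<n}. tm T)"
    unfolding tm_def prodst_def using zb_updA[OF n order_refl zN] tup_updA[OF n _ Nv] by simp
  also have "\<dots> = (\<Sum>T\<in>{{}, {..<n}}. tm T)"
  proof (rule sum.mono_neutral_right)
    show "finite (Pow {..<n::nat})" by simp
    show "{{}, {..<n}} \<subseteq> Pow {..<n}" by auto
    show "\<forall>T\<in>Pow {..<n} - {{}, {..<n}}. tm T = 0"
    proof (intro ballI, rule ccontr)
      fix T assume T: "T \<in> Pow {..<n} - {{}, {..<n}}" and nz: "tm T \<noteq> 0"
      have "\<forall>i\<in>{..<n}. phi3 (loc (v (2*i)) (v (2*i+1)) (1 - chi T (pd n i)) (chi T i)) \<noteq> 0"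
        using nz unfolding tm_def by (auto simp: prod_zero_iff)
      then have cl: "pd n i \<in> T" if "i < n" "i \<in> T" for i
      proof (rule contrapos_pp)
        assume "pd n i \<notin> T"
        then have "phi3 (loc (v (2*i)) (v (2*i+1)) (1 - chi T (pd n i)) (chi T i)) = 0"
          using that F1 by (simp add: chi_def)
        then show "\<not> (\<forall>i\<in>{..<n}. phi3 (loc (v (2*i)) (v (2*i+1)) (1 - chi T (pd n i)) (chi T i)) \<noteq> 0)"
          using that by auto
      qed
      have "T = {..<n}" using closure_all[OF n _ cl] T by auto
      then show False using T by auto
    qed
  qed
  also have "\<dots> = tm {} + tm {..<n}"
    using n by (subst sum.insert) auto
  also have "tm {} = (if \<forall>i<n. v (2*i) = 1 \<and> v (2*i+1) = 0 then (1/2)^n * (\<Prod>j<n. bs_coeff 0 1 (m (2*j+1))) else 0)"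
  proof -
    have "(\<Prod>i<n. phi3 (loc (v (2*i)) (v (2*i+1)) (1 - chi {} (pd n i)) (chi {} i)))
        = (\<Prod>i<n. if v (2*i) = 1 \<and> v (2*i+1) = 0 then 1/2 else 0)"
      by (rule prod.cong) (auto simp: chi_def F2 F2[unfolded One_nat_def])
    moreover have "W {} = (\<Prod>j<n. bs_coeff 0 1 (m (2*j+1)))"
      unfolding W_def by (rule prod.cong) (auto simp: chi_def Na)
    moreover have ifm: "\<And>P (x::complex) a. x * (if P then a else 0) = (if P then a * x else 0)" by simp
    ultimately show ?thesis unfolding tm_def by (simp only: prod_if_all ifm)
  qed
  also have "tm {..<n} = (if \<forall>i<n. v (2*i) = 0 \<and> v (2*i+1) = 1 then (-1/2)^n * (\<Prod>j<n. bs_coeff 1 0 (m (2*j+1))) else 0)"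
  proof -
    have "(\<Prod>i<n. phi3 (loc (v (2*i)) (v (2*i+1)) (1 - chi {..<n} (pd n i)) (chi {..<n} i)))
        = (\<Prod>i<n. if v (2*i) = 0 \<and> v (2*i+1) = 1 then -1/2 else 0)"
      by (rule prod.cong) (use n pd_lt in \<open>auto simp: chi_def F3 F3[unfolded One_nat_def]\<close>)
    moreover have "W {..<n} = (\<Prod>j<n. bs_coeff 1 0 (m (2*j+1)))"
      unfolding W_def by (rule prod.cong) (auto simp: chi_def Na)
    moreover have ifm: "\<And>P (x::complex) a. x * (if P then a else 0) = (if P then a * x else 0)" by simp
    ultimately show ?thesis unfolding tm_def by (simp only: prod_if_all ifm)
  qed
  finally show ?thesis by (simp add: N0_def)
qed

lemma amp_one: "(\<forall>k. N k \<le> 1) \<Longrightarrow> amp \<psi> N = \<psi> N"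
proof -
  assume a: "\<forall>k. N k \<le> 1"
  have "(\<Prod>k\<in>{k. N k \<noteq> 0}. fact (N k)) = (1::nat)"
  proof (rule prod.neutral, intro ballI)
    fix k assume "k \<in> {k. N k \<noteq> 0}"
    then have "N k = 1" using a[rule_format, of k] by auto
    then show "fact (N k) = (1::nat)" by simp
  qed
  then show ?thesis by (simp add: amp_def)
qed

lemma amp_zero: "\<psi> N = 0 \<Longrightarrow> amp \<psi> N = 0" by (simp add: amp_def)

lemma amp_phase: "amp (phase_flip r \<psi>) N = (-1) ^ (N r) * amp \<psi> N"
  by (simp add: amp_def phase_flip_def)

lemma bs01_alt: "x \<le> 1 \<Longrightarrow> bs_coeff 0 1 x = (-1) ^ x * (-1 / complex_of_real (sqrt 2))"
  by (cases x) (auto simp: bs_01_0 bs_01_1[unfolded One_nat_def] bs_01_0[unfolded One_nat_def])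

lemma bs10_alt: "x \<le> 1 \<Longrightarrow> bs_coeff 1 0 x = 1 / complex_of_real (sqrt 2)"
  by (cases x) (auto simp: bs_10_0 bs_10_1 bs_10_0[unfolded One_nat_def] bs_10_1[unfolded One_nat_def])

theorem lemma3:
  fixes n :: nat and m :: "nat \<Rightarrow> nat"
  assumes "n \<ge> 3"
    and "analyzer_success n m"
    and "ghz_output n m \<noteq> (\<lambda>_. 0)"
  shows "\<exists>c::complex. c \<noteq> 0 \<and> (\<forall>v. ghz_output n m v = c * B_plus n v)"
proof -
  have n: "0 < n" using assms(1) by auto
  have succ: "analyzer_success n m" by fact
  define s where "s = s_odd n m"
  define r2 where "r2 = complex_of_real (sqrt 2)"
  have r2nz: "r2 \<noteq> 0" by (simp add: r2_def)
  define K where "K = (-1/2)^n * (1/r2)^n"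
  have mle: "m (2*j+1) \<le> 1" if "j < n" for j using m_le1[OF n succ] that by auto
  have P01: "(\<Prod>j<n. bs_coeff 0 1 (m (2*j+1))) = (-1)^s * (-1/r2)^n"
  proof -
    have "(\<Prod>j<n. bs_coeff 0 1 (m (2*j+1))) = (\<Prod>j<n. (-1) ^ m (2*j+1) * (-1/r2))"
    proof (rule prod.cong[OF refl])
      fix j assume "j \<in> {..<n}"
      then have "m (2*j+1) \<le> 1" using mle by auto
      then show "bs_coeff 0 1 (m (2*j+1)) = (-1) ^ m (2*j+1) * (-1/r2)"
        unfolding r2_def by (rule bs01_alt)
    qed
    also have "\<dots> = (\<Prod>j<n. (-1::complex) ^ m (2*j+1)) * (-1/r2)^n"
      by (simp only: prod.distrib prod_constant card_lessThan)
    also have "(\<Prod>j<n. (-1::complex) ^ m (2*j+1)) = (-1)^s"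
      unfolding s_def s_odd_def by (simp add: power_sum)
    finally show ?thesis .
  qed
  have P10: "(\<Prod>j<n. bs_coeff 1 0 (m (2*j+1))) = (1/r2)^n"
  proof -
    have "(\<Prod>j<n. bs_coeff 1 0 (m (2*j+1))) = (\<Prod>j<n. 1/r2)"
    proof (rule prod.cong[OF refl])
      fix j assume "j \<in> {..<n}"
      then have "m (2*j+1) \<le> 1" using mle by auto
      then show "bs_coeff 1 0 (m (2*j+1)) = 1/r2"
        unfolding r2_def by (rule bs10_alt)
    qed
    then show ?thesis by simp
  qed
  have Eterm: "(1/2)^n * (\<Prod>j<n. bs_coeff 0 1 (m (2*j+1))) = (-1)^s * K"
  proof -
    have "(1/2::complex)^n * (-1/r2)^n = ((1/2) * (-1/r2))^n" by (rule power_mult_distrib[symmetric])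
    also have "\<dots> = ((-1/2) * (1/r2))^n" by simp
    also have "\<dots> = K" unfolding K_def by (rule power_mult_distrib)
    finally show ?thesis unfolding P01 by (simp add: mult_ac)
  qed
  have Oterm: "(-1/2)^n * (\<Prod>j<n. bs_coeff 1 0 (m (2*j+1))) = K"
    unfolding P10 K_def ..
  define evenP where "evenP = (\<lambda>k. if k < 2 * n \<and> even k then 1 else (0::nat))"
  define oddP where "oddP = (\<lambda>k. if k < 2 * n \<and> odd k then 1 else (0::nat))"
  have eo: "evenP \<noteq> oddP" using n by (auto simp: evenP_def oddP_def fun_eq_iff intro!: exI[of _ 0])
  have Bp_e: "B_plus n evenP = 1 / r2" using eo by (simp add: B_plus_def evenP_def oddP_def r2_def)
  have Bp_o: "B_plus n oddP = 1 / r2" using eo by (simp add: B_plus_def evenP_def oddP_def r2_def)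
  have Bp_0: "B_plus n v = 0" if "v \<noteq> evenP" "v \<noteq> oddP" for v
    using that by (simp add: B_plus_def evenP_def oddP_def)
  have Eiff: "(\<forall>i<n. v (2*i) = 1 \<and> v (2*i+1) = 0) \<longleftrightarrow> v = evenP" if Zv: "\<forall>k\<ge>2*n. v k = 0" for v
  proof
    assume A: "\<forall>i<n. v (2*i) = 1 \<and> v (2*i+1) = 0"
    show "v = evenP"
    proof (rule ext)
      fix k show "v k = evenP k"
      proof (cases "k < 2*n")
        case True
        then show ?thesis using A
          by (cases "even k") (auto simp: evenP_def elim!: evenE oddE)
      next
        case False then show ?thesis using Zv by (auto simp: evenP_def)
      qed
    qed
  qed (auto simp: evenP_def)
  have Oiff: "(\<forall>i<n. v (2*i) = 0 \<and> v (2*i+1) = 1) \<longleftrightarrow> v = oddP" if Zv: "\<forall>k\<ge>2*n. v k = 0" for v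
  proof
    assume A: "\<forall>i<n. v (2*i) = 0 \<and> v (2*i+1) = 1"
    show "v = oddP"
    proof (rule ext)
      fix k show "v k = oddP k"
      proof (cases "k < 2*n")
        case True
        then show ?thesis using A
          by (cases "even k") (auto simp: oddP_def elim!: evenE oddE)
      next
        case False then show ?thesis using Zv by (auto simp: oddP_def)
      qed
    qed
  qed (auto simp: oddP_def)
  have Nle: "\<forall>k. join_occ n v m k \<le> 1" if "v = evenP \<or> v = oddP" for v
  proof
    fix k
    show "join_occ n v m k \<le> 1"
    proof (cases "k < 2*n")
      case True then show ?thesis using that by (auto simp: join_occ_def evenP_def oddP_def)
    next
      case False
      then show ?thesis using m_le1[OF n succ, of "k - 2*n"] by (auto simp: join_occ_def)
    qed
  qed
  define c where "c = r2 * ((-1)^s * K)"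
  have cnz: "c \<noteq> 0" using r2nz by (simp add: c_def K_def)
  have main: "ghz_output n m v = c * B_plus n v" for v
  proof (cases "\<forall>k\<ge>2*n. v k = 0")
    case False
    then have "v \<noteq> evenP" "v \<noteq> oddP" by (auto simp: evenP_def oddP_def)
    moreover have "ghz_output n m v = 0" unfolding ghz_output_def by (simp only: False if_False)
    ultimately show ?thesis by (simp add: Bp_0)
  next
    case Zv: True
    have pv: "pre_measurement n (join_occ n v m) = (if v = evenP then (-1)^s * K else 0) + (if v = oddP then K else 0)"
      using pre_val[OF n succ Zv] Eiff[OF Zv] Oiff[OF Zv] Eterm Oterm by simp
    have j1: "join_occ n v m 1 = v 1" using n by (simp add: join_occ_def)
    have out: "ghz_output n m v = (if odd s then (-1) ^ (v 1) else 1) * amp (pre_measurement n) (join_occ n v m)"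
      using Zv by (simp add: ghz_output_def amp_phase j1 j1[unfolded One_nat_def] s_def)
    consider "v = evenP" | "v = oddP" | "v \<noteq> evenP \<and> v \<noteq> oddP" by blast
    then show ?thesis
    proof cases
      case 1
      have "v 1 = 0" using 1 by (simp add: evenP_def)
      then show ?thesis unfolding out amp_one[OF Nle[OF disjI1[OF 1]]] pv using 1 eo
        by (simp add: Bp_e c_def r2nz)
    next
      case 2
      have "v 1 = 1" using 2 n by (simp add: oddP_def)
      then show ?thesis unfolding out amp_one[OF Nle[OF disjI2[OF 2]]] pv using 2 eo
        by (auto simp: Bp_o c_def r2nz)
    next
      case 3
      then show ?thesis unfolding out using pv by (simp add: amp_zero Bp_0)
    qed
  qed
  show ?thesis using cnz main by blast
qed

end
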